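(* For any $a,b\in M^*$, the intersection $S_a\cap S_b^{\varphi}$ contains at most one point, where $S_b^{\varphi}=\{F(c^qb^q+ci): c\in M^*\}$.
   Context: Let $q$ be a prime power, $n>1$ an integer, $F=\mathbb F_q\subset M=\mathbb F_{q^n}\subset L=\mathbb F_{q^{2n}}$. Regard $L$ as a $2n$-dimensional $F$-vector space; $\mathrm{PG}(2n-1,q)$ has as points the subspaces $Fz$, $z\in L^*$. Fix $i\in L\setminus M$, so every $z\in L$ is uniquely $z=a+ib$ with $a,b\in M$. For $a\in M$ let $S_a=\{F c(a+i): c\in M^*\}$. Let $\hat\varphi:L\to L$ be the $F$-linear bijection $\hat\varphi(a+ib)=a^q+ib$ ($a,b\in M$) and $\varphi$ the induced projectivity of $\mathrm{PG}(2n-1,q)$; $S_b^\varphi$ denotes the image of $S_b$ under $\varphi$. *)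

theory Defs
  imports "HOL-Computational_Algebra.Primes" "HOL-Library.Cardinality"
begin

text \<open>L is modelled as a finite field type of cardinality q^(2n).
  The subfield F = GF(q) is the fixed field of x \<mapsto> x^q,
  the subfield M = GF(q^n) is the fixed field of x \<mapsto> x^(q^n).\<close>

definition subF :: "nat \<Rightarrow> 'a::field set" where
  "subF q = {x. x ^ q = x}"

definition subM :: "nat \<Rightarrow> nat \<Rightarrow> 'a::field set" where
  "subM q n = {x. x ^ (q ^ n) = x}"

text \<open>The projective point F z (the 1-dimensional F-subspace spanned by z).\<close>
definition pt :: "'a::field set \<Rightarrow> 'a \<Rightarrow> 'a set" where
  "pt F z = (\<lambda>f. f * z) ` F"

definition Sset :: "'a::field set \<Rightarrow> 'a set \<Rightarrow> 'a \<Rightarrow> 'a \<Rightarrow> 'a set set" where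
  "Sset F M i a = {pt F (c * (a + i)) | c. c \<in> M \<and> c \<noteq> 0}"

definition phihat :: "nat \<Rightarrow> 'a::field set \<Rightarrow> 'a \<Rightarrow> 'a \<Rightarrow> 'a" where
  "phihat q M i z =
     (case (THE (a, b). a \<in> M \<and> b \<in> M \<and> z = a + i * b) of (a, b) \<Rightarrow> a ^ q + i * b)"

definition phi :: "nat \<Rightarrow> 'a::field set \<Rightarrow> 'a \<Rightarrow> 'a set \<Rightarrow> 'a set" where
  "phi q M i P = phihat q M i ` P"

end

theory Submission
  imports Defs "HOL-Number_Theory.Residues"
begin

lemma char_eq:
  fixes p :: nat
  assumes "prime p" "CARD('a::{field,finite}) = p ^ m"
  shows "CHAR('a) = p"
proof -
  have pc: "prime CHAR('a)"
    by (rule prime_CHAR_semidom) (rule finite_imp_CHAR_pos, simp)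
  have "CHAR('a) dvd p ^ m" using CHAR_dvd_CARD[where 'a='a] assms(2) by simp
  hence "CHAR('a) dvd p" using pc prime_dvd_power by blast
  thus ?thesis using pc assms(1) primes_dvd_imp_eq by blast
qed

lemma frob_add:
  fixes x y :: "'a::{field,finite}"
  assumes "prime CHAR('a)" "Q = CHAR('a) ^ m"
  shows "(x + y) ^ Q = x ^ Q + y ^ Q"
  using freshmans_dream'[OF assms] by simp

lemma frob_diff:
  fixes x y :: "'a::{field,finite}"
  assumes "prime CHAR('a)" "Q = CHAR('a) ^ m"
  shows "(x - y) ^ Q = x ^ Q - y ^ Q"
proof -
  have "x ^ Q = ((x - y) + y) ^ Q" by simp
  also have "\<dots> = (x - y) ^ Q + y ^ Q" by (rule frob_add[OF assms])
  finally show ?thesis by simp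
qed

lemma F_sub_M:
  fixes x :: "'a::field"
  assumes "x ^ q = x"
  shows "x ^ (q ^ n) = x"
proof (induction n)
  case (Suc n)
  have "x ^ (q ^ Suc n) = (x ^ q) ^ (q ^ n)" by (simp add: power_mult mult.commute)
  thus ?case using assms Suc by simp
qed simp

lemma pt_scale:
  fixes r z :: "'a::field"
  assumes "r ^ q = r" "r \<noteq> 0"
  shows "pt (subF q) (r * z) = pt (subF q) z"
proof
  show "pt (subF q) (r * z) \<subseteq> pt (subF q) z"
  proof
    fix w assume "w \<in> pt (subF q) (r * z)"
    then obtain f where f: "f ^ q = f" "w = f * (r * z)" unfolding pt_def subF_def by auto
    have "(f * r) ^ q = f * r" using f assms by (simp add: power_mult_distrib)
    thus "w \<in> pt (subF q) z" unfolding pt_def subF_def using f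
      by (intro image_eqI[where x="f*r"]) (auto simp: mult.assoc)
  qed
next
  show "pt (subF q) z \<subseteq> pt (subF q) (r * z)"
  proof
    fix w assume "w \<in> pt (subF q) z"
    then obtain f where f: "f ^ q = f" "w = f * z" unfolding pt_def subF_def by auto
    have "(f / r) ^ q = f / r" using f assms by (simp add: power_divide)
    moreover have "w = (f / r) * (r * z)" using f assms by simp
    ultimately show "w \<in> pt (subF q) (r * z)" unfolding pt_def subF_def
      by (intro image_eqI[where x="f/r"]) auto
  qed
qed

theorem mainTheorem9:
  fixes q n :: nat and i a b :: "'a::{field,finite}"
  assumes "\<exists>p k. prime (p::nat) \<and> k > 0 \<and> q = p ^ k"
    and "n > 1"
    and "CARD('a) = q ^ (2 * n)"
    and "i \<notin> subM q n"
    and "a \<in> subM q n" and "a \<noteq> 0"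
    and "b \<in> subM q n" and "b \<noteq> 0"
  shows "card (Sset (subF q) (subM q n) i a
               \<inter> phi q (subM q n) i ` Sset (subF q) (subM q n) i b) \<le> 1"
proof -
  obtain p k where pk: "prime p" "k > 0" "q = p ^ k" using assms(1) by blast
  define Q where "Q = q ^ n"
  have card: "CARD('a) = p ^ (k * (2 * n))" using assms(3) pk by (simp add: power_mult)
  have ch: "CHAR('a) = p" by (rule char_eq[OF pk(1) card])
  have pc: "prime CHAR('a)" using ch pk by simp
  have QC: "Q = CHAR('a) ^ (k * n)" using ch pk Q_def by (simp add: power_mult)
  let ?M = "subM q n" and ?F = "subF q"
  have Mmem: "x \<in> ?M \<longleftrightarrow> x ^ Q = x" for x :: 'a unfolding subM_def Q_def by simp
  have Fmem: "x \<in> ?F \<longleftrightarrow> x ^ q = x" for x :: 'a unfolding subF_def by simp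
  have FM: "x \<in> ?F \<Longrightarrow> x \<in> ?M" for x :: 'a
    using F_sub_M[of x q n] unfolding Fmem Mmem Q_def by simp
  have Mmul: "x \<in> ?M \<Longrightarrow> y \<in> ?M \<Longrightarrow> x * y \<in> ?M" for x y :: 'a
    using Mmem by (simp add: power_mult_distrib)
  have Mdiv: "x \<in> ?M \<Longrightarrow> y \<in> ?M \<Longrightarrow> x / y \<in> ?M" for x y :: 'a
    using Mmem by (simp add: power_divide)
  have Mdiff: "x \<in> ?M \<Longrightarrow> y \<in> ?M \<Longrightarrow> x - y \<in> ?M" for x y :: 'a
    using Mmem frob_diff[OF pc QC] by simp
  have Mpow: "x \<in> ?M \<Longrightarrow> x ^ q \<in> ?M" for x :: 'a
    using Mmem by (metis power_mult mult.commute)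
  have uniq: "a1 = a2 \<and> b1 = b2" if "a1 \<in> ?M" "a2 \<in> ?M" "b1 \<in> ?M" "b2 \<in> ?M"
      "a1 + i * b1 = a2 + i * b2" for a1 a2 b1 b2 :: 'a
  proof (cases "b1 = b2")
    case True thus ?thesis using that by simp
  next
    case False
    have "i * (b1 - b2) = a2 - a1" using that(5) by (simp add: algebra_simps)
    hence "i = (a2 - a1) / (b1 - b2)" using False by (simp add: field_simps)
    hence "i \<in> ?M" using Mdiv Mdiff that by simp
    thus ?thesis using assms(4) by simp
  qed
  have ph: "phihat q ?M i (x + i * y) = x ^ q + i * y" if "x \<in> ?M" "y \<in> ?M" for x y :: 'a
  proof -
    have "(THE (u, v). u \<in> ?M \<and> v \<in> ?M \<and> x + i * y = u + i * v) = (x, y)"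
      by (rule the_equality) (use that uniq in auto)
    thus ?thesis unfolding phihat_def by simp
  qed
  have phi_pt: "phi q ?M i (pt ?F (d * (b + i))) = pt ?F (d ^ q * b ^ q + i * d)"
    if "d \<in> ?M" for d :: 'a
  proof -
    have "phihat q ?M i (f * (d * (b + i))) = f * (d ^ q * b ^ q + i * d)" if "f \<in> ?F" for f :: 'a
    proof -
      have "f * (d * (b + i)) = f * d * b + i * (f * d)" by (simp add: algebra_simps)
      moreover have "f * d * b \<in> ?M" "f * d \<in> ?M" using FM Mmul that \<open>d \<in> ?M\<close> assms(7) by auto
      ultimately have "phihat q ?M i (f * (d * (b + i))) = (f * d * b) ^ q + i * (f * d)"
        using ph by simp
      also have "\<dots> = f * (d ^ q * b ^ q + i * d)" using that Fmem
        by (simp add: power_mult_distrib algebra_simps)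
      finally show ?thesis .
    qed
    thus ?thesis unfolding phi_def pt_def by (auto simp: image_image intro!: image_cong)
  qed
  have key: "\<exists>d. d \<in> ?M \<and> d \<noteq> 0 \<and> d * a = d ^ q * b ^ q \<and> P = pt ?F (d * (a + i))"
    if PS: "P \<in> Sset ?F ?M i a \<inter> phi q ?M i ` Sset ?F ?M i b" for P :: "'a set"
  proof -
    obtain c where c: "c \<in> ?M" "c \<noteq> 0" "P = pt ?F (c * (a + i))"
    proof -
      have "P \<in> Sset ?F ?M i a" using PS by blast
      thus ?thesis using that unfolding Sset_def by blast
    qed
    obtain d where d: "d \<in> ?M" "d \<noteq> 0" "P = pt ?F (d ^ q * b ^ q + i * d)"
      using PS phi_pt unfolding Sset_def by auto
    have "1 \<in> ?F" unfolding subF_def by simp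
    hence "d ^ q * b ^ q + i * d \<in> P" using d unfolding pt_def by force
    then obtain f where f: "f \<in> ?F" "d ^ q * b ^ q + i * d = f * (c * (a + i))"
      using c unfolding pt_def by auto
    have e: "d ^ q * b ^ q + i * d = f * c * a + i * (f * c)" using f by (simp add: algebra_simps)
    have m1: "d ^ q * b ^ q \<in> ?M" using Mmul Mpow d assms(7) by simp
    have m2: "f * c * a \<in> ?M" "f * c \<in> ?M" using FM f c Mmul assms(5) by auto
    have "d ^ q * b ^ q = f * c * a \<and> d = f * c" by (rule uniq[OF m1 m2(1) d(1) m2(2) e])
    hence "d * a = d ^ q * b ^ q" "d * (a + i) = d ^ q * b ^ q + i * d"
      by (auto simp: algebra_simps)
    thus ?thesis using d by metis
  qed
  have "\<forall>x\<in>Sset ?F ?M i a \<inter> phi q ?M i ` Sset ?F ?M i b.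
        \<forall>y\<in>Sset ?F ?M i a \<inter> phi q ?M i ` Sset ?F ?M i b. x = y"
  proof (intro ballI)
    fix x y assume x: "x \<in> Sset ?F ?M i a \<inter> phi q ?M i ` Sset ?F ?M i b"
      and y: "y \<in> Sset ?F ?M i a \<inter> phi q ?M i ` Sset ?F ?M i b"
    obtain d1 where d1: "d1 \<noteq> 0" "d1 * a = d1 ^ q * b ^ q" "x = pt ?F (d1 * (a + i))"
      using key[OF x] by blast
    obtain d2 where d2: "d2 \<noteq> 0" "d2 * a = d2 ^ q * b ^ q" "y = pt ?F (d2 * (a + i))"
      using key[OF y] by blast
    define r where "r = d2 / d1"
    have bq: "b ^ q \<noteq> 0" using assms(8) by simp
    have "r ^ q = d2 ^ q / d1 ^ q" unfolding r_def by (simp add: power_divide)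
    also have "\<dots> = (d2 * a / b ^ q) / (d1 * a / b ^ q)" using d1 d2 bq by simp
    also have "\<dots> = r" unfolding r_def using assms(6) assms(8) bq d1(1) by (simp add: field_simps)
    finally have rq: "r ^ q = r" .
    have r0: "r \<noteq> 0" unfolding r_def using d1 d2 by simp
    have e2: "d2 * (a + i) = r * (d1 * (a + i))" unfolding r_def using d1 by simp
    have "y = pt ?F (r * (d1 * (a + i)))" using d2(3) e2 by simp
    also have "\<dots> = x" using pt_scale[OF rq r0] d1(3) by simp
    finally show "x = y" by simp
  qed
  thus ?thesis by (simp add: card_le_Suc0_iff_eq)
qed

end
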